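(* Let $\mathcal{X}$ and $\mathcal{Y}$ be discrete (finite or countable) alphabets. Let $\{p_\theta\}_{\theta\in\Theta}$ be a nonempty family of probability distributions on $\mathcal{X}$ (the uncertain distributions of $X$) and let $\{\boldsymbol{P}_\lambda\}_{\lambda\in\Lambda}$ be a nonempty family of transition probability matrices $\boldsymbol{P}_\lambda=(p_\lambda(y|x))_{x\in\mathcal X,y\in\mathcal Y}$ (the uncertain transition probability matrices of $Y$ given $X$). Then $$\hat H(X,Y)\le \hat H(X)+\hat H(Y|X).$$ Moreover, equality holds when $\Theta$ and $\Lambda$ are singletons (i.e. the distribution of $X$ and the transition matrix of $Y$ given $X$are deterministic), and if $\hat H(Y|X)=0$ then $\hat H(X,Y)=\hat H(X)$.
   Context: Convention: $0\log\frac10=0$; all quantities take values in $[0,\infty]$. The nonlinear quantities are defined by $\hat H(X)=\sup_{\theta\in\Theta}\sum_x p_\theta(x)\log\frac{1}{p_\theta(x)}$; $\hat H(X,Y)=\sup_{\theta\in\Theta}\sup_{\lambda\in\Lambda}\sum_{x,y}p_\theta(x)p_\lambda(y|x)\log\frac{1}{p_\theta(x)p_\lambda(y|x)}$; $\hat H(Y|X=x)=\sup_{\lambda\in\Lambda}\sum_y p_\lambda(y|x)\log\frac{1}{p_\lambda(y|x)}$; $\hat H(Y|X)=\sup_{\theta\in\Theta}\sum_x p_\theta(x)\hat H(Y|X=x)$. *)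

theory Defs
  imports "HOL-Analysis.Analysis"
begin

definition ent_term :: "real \<Rightarrow> ennreal" where
  "ent_term t = ennreal (if t = 0 then 0 else t * ln (1 / t))"

definition is_distr :: "('x \<Rightarrow> real) \<Rightarrow> bool" where
  "is_distr q \<longleftrightarrow> (\<forall>x. q x \<ge> 0) \<and> (q has_sum 1) UNIV"

definition is_transition :: "('x \<Rightarrow> 'y \<Rightarrow> real) \<Rightarrow> bool" where
  "is_transition W \<longleftrightarrow> (\<forall>x. is_distr (W x))"

definition nl_H_X :: "'t set \<Rightarrow> ('t \<Rightarrow> 'x \<Rightarrow> real) \<Rightarrow> ennreal" where
  "nl_H_X \<Theta> p = (SUP \<theta>\<in>\<Theta>. \<Sum>\<^sub>\<infinity>x. ent_term (p \<theta> x))"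

definition nl_H_XY :: "'t set \<Rightarrow> 'l set \<Rightarrow> ('t \<Rightarrow> 'x \<Rightarrow> real) \<Rightarrow> ('l \<Rightarrow> 'x \<Rightarrow> 'y \<Rightarrow> real) \<Rightarrow> ennreal" where
  "nl_H_XY \<Theta> \<Lambda> p P = (SUP \<theta>\<in>\<Theta>. SUP l\<in>\<Lambda>.
      infsum (\<lambda>(x, y). ent_term (p \<theta> x * P l x y)) UNIV)"

definition nl_H_Y_given_x :: "'l set \<Rightarrow> ('l \<Rightarrow> 'x \<Rightarrow> 'y \<Rightarrow> real) \<Rightarrow> 'x \<Rightarrow> ennreal" where
  "nl_H_Y_given_x \<Lambda> P x = (SUP l\<in>\<Lambda>. \<Sum>\<^sub>\<infinity>y. ent_term (P l x y))"

definition nl_H_Y_given_X :: "'t set \<Rightarrow> 'l set \<Rightarrow> ('t \<Rightarrow> 'x \<Rightarrow> real) \<Rightarrow> ('l \<Rightarrow> 'x \<Rightarrow> 'y \<Rightarrow> real) \<Rightarrow> ennreal" where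
  "nl_H_Y_given_X \<Theta> \<Lambda> p P = (SUP \<theta>\<in>\<Theta>. \<Sum>\<^sub>\<infinity>x. ennreal (p \<theta> x) * nl_H_Y_given_x \<Lambda> P x)"

end

theory Submission
  imports Defs
begin

lemma ennsum_le_infsum:
  fixes f :: "'a \<Rightarrow> ennreal"
  assumes "finite F" "F \<subseteq> A"
  shows "sum f F \<le> infsum f A"
  using assms by (subst nonneg_infsum_complete) (auto intro!: SUP_upper)

lemma enn_infsum_cmult:
  fixes f :: "'a \<Rightarrow> ennreal"
  shows "infsum (\<lambda>x. c * f x) A = c * infsum f A"
  by (simp add: nonneg_infsum_complete SUP_mult_left_ennreal sum_distrib_left)

lemma enn_infsum_add:
  fixes f g :: "'a \<Rightarrow> ennreal"
  shows "infsum (\<lambda>x. f x + g x) A = infsum f A + infsum g A"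
  by (rule infsum_add; rule nonneg_summable_on_complete; simp)

lemma enn_infsum_sum:
  fixes f :: "'i \<Rightarrow> 'a \<Rightarrow> ennreal"
  assumes "finite X"
  shows "infsum (\<lambda>y. \<Sum>x\<in>X. f x y) A = (\<Sum>x\<in>X. infsum (f x) A)"
  using assms by (induction X rule: finite_induct) (auto simp: enn_infsum_add)

lemma enn_infsum_Sigma:
  fixes f :: "'a \<times> 'b \<Rightarrow> ennreal"
  shows "infsum f UNIV = infsum (\<lambda>x. infsum (\<lambda>y. f (x, y)) UNIV) UNIV"
proof (rule antisym)
  show "infsum f UNIV \<le> infsum (\<lambda>x. infsum (\<lambda>y. f (x, y)) UNIV) UNIV"
  proof (subst nonneg_infsum_complete[of UNIV f], simp, rule SUP_least, clarsimp)
    fix F :: "('a \<times> 'b) set" assume F: "finite F"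
    have "sum f F \<le> sum f (fst ` F \<times> snd ` F)"
      using F by (intro sum_mono2) (auto intro: rev_image_eqI)
    also have "\<dots> = (\<Sum>x\<in>fst ` F. \<Sum>y\<in>snd ` F. f (x, y))"
      by (simp add: sum.cartesian_product)
    also have "\<dots> \<le> (\<Sum>x\<in>fst ` F. infsum (\<lambda>y. f (x, y)) UNIV)"
      using F by (intro sum_mono ennsum_le_infsum) auto
    also have "\<dots> \<le> infsum (\<lambda>x. infsum (\<lambda>y. f (x, y)) UNIV) UNIV"
      using F by (intro ennsum_le_infsum) auto
    finally show "sum f F \<le> infsum (\<lambda>x. infsum (\<lambda>y. f (x, y)) UNIV) UNIV" .
  qed
next
  show "infsum (\<lambda>x. infsum (\<lambda>y. f (x, y)) UNIV) UNIV \<le> infsum f UNIV"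
  proof (subst nonneg_infsum_complete, simp, rule SUP_least, clarsimp)
    fix X :: "'a set" assume X: "finite X"
    have "(\<Sum>x\<in>X. infsum (\<lambda>y. f (x, y)) UNIV) = infsum (\<lambda>y. \<Sum>x\<in>X. f (x, y)) UNIV"
      using X by (simp add: enn_infsum_sum)
    also have "\<dots> \<le> infsum f UNIV"
    proof (subst nonneg_infsum_complete, simp, rule SUP_least, clarsimp)
      fix G :: "'b set" assume G: "finite G"
      have "(\<Sum>y\<in>G. \<Sum>x\<in>X. f (x, y)) = sum f (X \<times> G)"
        by (subst sum.swap) (simp add: sum.cartesian_product)
      also have "\<dots> \<le> infsum f UNIV"
        using X G by (intro ennsum_le_infsum) auto
      finally show "(\<Sum>y\<in>G. \<Sum>x\<in>X. f (x, y)) \<le> infsum f UNIV" .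
    qed
    finally show "(\<Sum>x\<in>X. infsum (\<lambda>y. f (x, y)) UNIV) \<le> infsum f UNIV" .
  qed
qed

lemma distr_ennreal:
  assumes "is_distr q"
  shows "infsum (\<lambda>x. ennreal (q x)) UNIV = 1"
proof -
  have nn: "\<And>x. q x \<ge> 0" and hs: "(q has_sum 1) UNIV" using assms by (auto simp: is_distr_def)
  have "infsum (ennreal \<circ> q) UNIV = ennreal (infsum q UNIV)"
    using hs nn by (intro infsum_comm_additive_general) (auto simp: sum_ennreal summable_on_def continuous_on_ennreal isCont_def intro: tendsto_ennrealI)
  also have "infsum q UNIV = 1" using hs by (simp add: infsumI)
  finally show ?thesis by (simp add: o_def)
qed

lemma distr_le1:
  assumes "is_distr q"
  shows "q x \<le> 1" "0 \<le> q x"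
proof -
  have "ennreal (q x) = sum (\<lambda>x. ennreal (q x)) {x}" by simp
  also have "\<dots> \<le> 1" using ennsum_le_infsum[of "{x}" UNIV "\<lambda>x. ennreal (q x)"] distr_ennreal[OF assms] by simp
  finally show "q x \<le> 1" using assms by (simp add: is_distr_def)
  show "0 \<le> q x" using assms by (simp add: is_distr_def)
qed

lemma ent_mult:
  fixes a b :: real
  assumes "0 \<le> a" "a \<le> 1" "0 \<le> b" "b \<le> 1"
  shows "ent_term (a * b) = ent_term a * ennreal b + ennreal a * ent_term b"
proof (cases "a = 0 \<or> b = 0")
  case True then show ?thesis by (auto simp: ent_term_def)
next
  case False
  then have a: "a > 0" and b: "b > 0" using assms by auto
  have la: "ln (1/a) \<ge> 0" and lb: "ln (1/b) \<ge> 0" using a b assms by auto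
  have "ln (1/(a*b)) = ln (1/a) + ln (1/b)" using a b by (simp add: ln_div ln_mult)
  then have "a * b * ln (1/(a*b)) = (a * ln (1/a)) * b + a * (b * ln (1/b))"
    by (simp add: algebra_simps)
  moreover have "a * ln (1/a) \<ge> 0" "b * ln (1/b) \<ge> 0" using a b la lb by auto
  ultimately show ?thesis using a b
    proof -
    have e1: "ent_term (a * b) = ennreal (a * b * ln (1/(a*b)))"
      using a b by (simp add: ent_term_def)
    have e2: "ent_term a = ennreal (a * ln (1/a))" "ent_term b = ennreal (b * ln (1/b))"
      using a b by (simp_all add: ent_term_def)
    have "ent_term a * ennreal b + ennreal a * ent_term b
        = ennreal (a * ln (1/a) * b) + ennreal (a * (b * ln (1/b)))"
      unfolding e2 using \<open>a * ln (1/a) \<ge> 0\<close> \<open>b * ln (1/b) \<ge> 0\<close> a b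
      by (simp only: ennreal_mult[symmetric] less_imp_le)
    also have "\<dots> = ennreal (a * ln (1/a) * b + a * (b * ln (1/b)))"
      using \<open>a * ln (1/a) \<ge> 0\<close> \<open>b * ln (1/b) \<ge> 0\<close> a b
      by (intro ennreal_plus[symmetric]) auto
    finally show ?thesis using e1 \<open>a * b * ln (1/(a*b)) = _\<close> by simp
  qed
qed

lemma key:
  assumes q: "is_distr q" and W: "is_transition W"
  shows "infsum (\<lambda>(x, y). ent_term (q x * W x y)) UNIV
    = infsum (\<lambda>x. ent_term (q x)) UNIV
      + infsum (\<lambda>x. ennreal (q x) * infsum (\<lambda>y. ent_term (W x y)) UNIV) UNIV"
proof -
  have Wd: "\<And>x. is_distr (W x)" using W by (simp add: is_transition_def)
  have "infsum (\<lambda>(x, y). ent_term (q x * W x y)) UNIV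
      = infsum (\<lambda>x. infsum (\<lambda>y. ent_term (q x * W x y)) UNIV) UNIV"
    by (subst enn_infsum_Sigma) simp
  also have "\<dots> = infsum (\<lambda>x. infsum (\<lambda>y. ent_term (q x) * ennreal (W x y)
        + ennreal (q x) * ent_term (W x y)) UNIV) UNIV"
    by (intro infsum_cong ent_mult distr_le1[OF q] distr_le1[OF Wd])
  also have "\<dots> = infsum (\<lambda>x. ent_term (q x) * infsum (\<lambda>y. ennreal (W x y)) UNIV
        + ennreal (q x) * infsum (\<lambda>y. ent_term (W x y)) UNIV) UNIV"
    by (simp add: enn_infsum_add enn_infsum_cmult)
  also have "\<dots> = infsum (\<lambda>x. ent_term (q x)
        + ennreal (q x) * infsum (\<lambda>y. ent_term (W x y)) UNIV) UNIV"
    by (simp add: distr_ennreal[OF Wd])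
  also have "\<dots> = infsum (\<lambda>x. ent_term (q x)) UNIV
      + infsum (\<lambda>x. ennreal (q x) * infsum (\<lambda>y. ent_term (W x y)) UNIV) UNIV"
    by (rule enn_infsum_add)
  finally show ?thesis .
qed

theorem theorem4:
  fixes \<Theta> :: "'t set" and \<Lambda> :: "'l set"
    and p :: "'t \<Rightarrow> 'x::countable \<Rightarrow> real"
    and P :: "'l \<Rightarrow> 'x \<Rightarrow> 'y::countable \<Rightarrow> real"
  assumes "\<Theta> \<noteq> {}" and "\<Lambda> \<noteq> {}"
    and "\<And>\<theta>. \<theta> \<in> \<Theta> \<Longrightarrow> is_distr (p \<theta>)"
    and "\<And>l. l \<in> \<Lambda> \<Longrightarrow> is_transition (P l)"
  shows "nl_H_XY \<Theta> \<Lambda> p P \<le> nl_H_X \<Theta> p + nl_H_Y_given_X \<Theta> \<Lambda> p P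
     \<and> ((\<exists>\<theta>0 l0. \<Theta> = {\<theta>0} \<and> \<Lambda> = {l0}) \<longrightarrow>
           nl_H_XY \<Theta> \<Lambda> p P = nl_H_X \<Theta> p + nl_H_Y_given_X \<Theta> \<Lambda> p P)
     \<and> (nl_H_Y_given_X \<Theta> \<Lambda> p P = 0 \<longrightarrow> nl_H_XY \<Theta> \<Lambda> p P = nl_H_X \<Theta> p)"
proof -
  note K = key[OF assms(3) assms(4)]
  have part1: "nl_H_XY \<Theta> \<Lambda> p P \<le> nl_H_X \<Theta> p + nl_H_Y_given_X \<Theta> \<Lambda> p P"
    unfolding nl_H_XY_def
  proof (intro SUP_least)
    fix \<theta> l assume th: "\<theta> \<in> \<Theta>" and l: "l \<in> \<Lambda>"
    have "infsum (\<lambda>(x, y). ent_term (p \<theta> x * P l x y)) UNIV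
      = infsum (\<lambda>x. ent_term (p \<theta> x)) UNIV
      + infsum (\<lambda>x. ennreal (p \<theta> x) * infsum (\<lambda>y. ent_term (P l x y)) UNIV) UNIV"
      using K[OF th l] .
    also have "\<dots> \<le> nl_H_X \<Theta> p
      + infsum (\<lambda>x. ennreal (p \<theta> x) * nl_H_Y_given_x \<Lambda> P x) UNIV"
    proof (intro add_mono)
      show "infsum (\<lambda>x. ent_term (p \<theta> x)) UNIV \<le> nl_H_X \<Theta> p"
        unfolding nl_H_X_def using th by (rule SUP_upper)
      show "infsum (\<lambda>x. ennreal (p \<theta> x) * infsum (\<lambda>y. ent_term (P l x y)) UNIV) UNIV
        \<le> infsum (\<lambda>x. ennreal (p \<theta> x) * nl_H_Y_given_x \<Lambda> P x) UNIV"
        by (intro infsum_mono nonneg_summable_on_complete mult_left_mono)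
          (auto simp: nl_H_Y_given_x_def intro!: SUP_upper l)
    qed
    also have "\<dots> \<le> nl_H_X \<Theta> p + nl_H_Y_given_X \<Theta> \<Lambda> p P"
      unfolding nl_H_Y_given_X_def using th by (intro add_left_mono SUP_upper)
    finally show "infsum (\<lambda>(x, y). ent_term (p \<theta> x * P l x y)) UNIV
      \<le> nl_H_X \<Theta> p + nl_H_Y_given_X \<Theta> \<Lambda> p P" .
  qed
  have part2: "nl_H_XY \<Theta> \<Lambda> p P = nl_H_X \<Theta> p + nl_H_Y_given_X \<Theta> \<Lambda> p P"
    if "\<Theta> = {\<theta>0}" "\<Lambda> = {l0}" for \<theta>0 l0
    using K[of \<theta>0 l0] that
    by (simp add: nl_H_XY_def nl_H_X_def nl_H_Y_given_X_def nl_H_Y_given_x_def)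
  have part3: "nl_H_X \<Theta> p \<le> nl_H_XY \<Theta> \<Lambda> p P"
    unfolding nl_H_X_def
  proof (intro SUP_least)
    fix \<theta> assume th: "\<theta> \<in> \<Theta>"
    obtain l where l: "l \<in> \<Lambda>" using assms(2) by blast
    have "infsum (\<lambda>x. ent_term (p \<theta> x)) UNIV
        \<le> infsum (\<lambda>(x, y). ent_term (p \<theta> x * P l x y)) UNIV"
      using K[OF th l] by simp
    also have "\<dots> \<le> nl_H_XY \<Theta> \<Lambda> p P"
      unfolding nl_H_XY_def using th l
      by (intro SUP_upper2[OF th] SUP_upper) auto
    finally show "infsum (\<lambda>x. ent_term (p \<theta> x)) UNIV \<le> nl_H_XY \<Theta> \<Lambda> p P" .
  qed
  show ?thesis
    using part1 part2 part3 by (auto intro: antisym)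
qed

end
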